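(* Let $\eta,\theta\in(0,1]$, let $k\ge2$, and let $C_{\rm out}\subseteq[Q]^n$ be a code of relative Hamming distance at least $1-\eta$. Let $C_{\rm in}\subseteq[k]^m$ be a code with $nQ$ codewords $e(i,\alpha)$, one for each $(i,\alpha)\in[n]\times[Q]$, such that for any two distinct codewords $c_1,c_2\in C_{\rm in}$ and any common subsequence $s$ of $c_1,c_2$ we have $\operatorname{span}s\ge(k+\sqrt k)\operatorname{len}s-\theta km$. Let $C_{\rm concat}\subseteq[k]^N$, $N=nm$, consist of, for each $c=(c_1,\dots,c_n)\in C_{\rm out}$, the word $e(1,c_1)e(2,c_2)\cdots e(n,c_n)$. Then \[\mathrm{LCS}(C_{\rm concat})\le\left(\frac2{k+\sqrt k}+2\theta+\eta\right)N.\]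
   Context: The relative Hamming distance of a code of block length $n$ is the minimum over distinct codewords $c,\tilde c$ of $\Delta(c,\tilde c)/n$, where $\Delta$ is the number of positions where they differ. Symbols are distinguishable positions. A common subsequence of words $w_1,w_2$ is a pair $s=(w_1',w_2')$ of subsequences equal as words; $\operatorname{len}s$ is their common length; the span of $w'$ in $w$ is the length of the shortest block of consecutive symbols of $w$ containing $w'$, and $\operatorname{span}s=\operatorname{span}_{w_1}w_1'+\operatorname{span}_{w_2}w_2'$. $\mathrm{LCS}(C)$ is the maximum over distinct codewords of the length of a longest common subsequence. *)

theory Defs
  imports Complex_Main
begin

definition words :: "nat \<Rightarrow> nat \<Rightarrow> nat list set" where
  "words q n = {w. length w = n \<and> set w \<subseteq> {0..<q}}"

definition hamming :: "nat list \<Rightarrow> nat list \<Rightarrow> nat" where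
  "hamming c d = card {i. i < length c \<and> c ! i \<noteq> d ! i}"

definition rel_dist_ge :: "nat list set \<Rightarrow> nat \<Rightarrow> real \<Rightarrow> bool" where
  "rel_dist_ge C n \<delta> \<longleftrightarrow>
     (\<forall>c\<in>C. \<forall>d\<in>C. c \<noteq> d \<longrightarrow> real (hamming c d) / real n \<ge> \<delta>)"

text \<open>A subsequence is given by its set of positions (symbols are distinguishable positions).
  A common subsequence of w1, w2 is a pair of position sets I, J giving equal words.\<close>
definition common_subseq :: "'a list \<Rightarrow> 'a list \<Rightarrow> nat set \<Rightarrow> nat set \<Rightarrow> bool" where
  "common_subseq w1 w2 I J \<longleftrightarrow>
     I \<subseteq> {..<length w1} \<and> J \<subseteq> {..<length w2} \<and> nths w1 I = nths w2 J"

definition subseq_len :: "nat set \<Rightarrow> nat" where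
  "subseq_len I = card I"

definition span :: "nat set \<Rightarrow> nat" where
  "span I = (if I = {} then 0 else Max I - Min I + 1)"

definition lcs_len :: "'a list \<Rightarrow> 'a list \<Rightarrow> nat" where
  "lcs_len w1 w2 = Sup {subseq_len I | I J. common_subseq w1 w2 I J}"

definition LCS :: "'a list set \<Rightarrow> nat" where
  "LCS C = Sup {lcs_len c d | c d. c \<in> C \<and> d \<in> C \<and> c \<noteq> d}"

end

theory Submission imports Defs begin

lemma filter_upt_sorted:
  assumes "I \<subseteq> {..<n}"
  shows "filter (\<lambda>i. i \<in> I) [0..<n] = sorted_list_of_set I"
proof -
  have "set (filter (\<lambda>i. i \<in> I) [0..<n]) = I" using assms by auto
  moreover have "sorted (filter (\<lambda>i. i \<in> I) [0..<n])" by (metis sorted_upt sorted_wrt_filter)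
  moreover have "distinct (filter (\<lambda>i. i \<in> I) [0..<n])" by simp
  ultimately show ?thesis
    using assms finite_subset[OF assms]
    by (intro sorted_distinct_set_unique) auto
qed

lemma nths_eq_map:
  assumes "I \<subseteq> {..<length xs}"
  shows "nths xs I = map ((!) xs) (sorted_list_of_set I)"
proof -
  have "zip xs [0..<length xs] = map (\<lambda>i. (xs!i, i)) [0..<length xs]"
    by (rule nth_equalityI) auto
  then have "nths xs I = map ((!) xs) (filter (\<lambda>i. i \<in> I) [0..<length xs])"
    unfolding nths_def by (simp add: filter_map o_def)
  then show ?thesis using filter_upt_sorted[OF assms] by simp
qed

lemma sorted_list_of_set_mono_image:
  fixes h :: "nat \<Rightarrow> nat"
  assumes "finite P" "strict_mono_on P h"
  shows "sorted_list_of_set (h ` P) = map h (sorted_list_of_set P)"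
proof -
  have ss: "sorted_wrt (<) (sorted_list_of_set P)" by (simp add: strict_sorted_list_of_set)
  have "sorted_wrt (<) (map h (sorted_list_of_set P))"
    unfolding sorted_wrt_map
    by (rule sorted_wrt_mono_rel[OF _ ss]) (use assms in \<open>auto simp: strict_mono_on_def\<close>)
  then show ?thesis
    using assms(1) by (intro strict_sorted_equal) (auto simp: strict_sorted_list_of_set)
qed

lemma nth_concat_blocks:
  assumes "\<And>i. i < n \<Longrightarrow> length (F i) = m" "p < n * m"
  shows "concat (map F [0..<n]) ! p = F (p div m) ! (p mod m)"
  using assms
proof (induction n)
  case 0 then show ?case by simp
next
  case (Suc n)
  have len: "length (concat (map F [0..<n])) = n * m"
    using Suc.prems(1) by (induction n) auto
  show ?case
  proof (cases "p < n * m")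
    case True then show ?thesis using Suc by (simp add: nth_append len)
  next
    case False
    then have "p div m = n" using Suc.prems(2)
      by (intro div_nat_eqI) (auto simp: mult.commute)
    moreover have "p - n * m = p mod m" using minus_div_mult_eq_mod[of p m] \<open>p div m = n\<close> by simp
    ultimately show ?thesis using False Suc.prems by (simp add: nth_append len)
  qed
qed


lemma span_shift:
  fixes X :: "nat set"
  assumes "finite X" "\<And>x. x \<in> X \<Longrightarrow> c \<le> x"
  shows "span ((\<lambda>x. x - c) ` X) = span X"
proof (cases "X = {}")
  case True then show ?thesis by (simp add: span_def)
next
  case False
  have mono: "mono (\<lambda>x::nat. x - c)" by (auto simp: mono_def)
  have "Max ((\<lambda>x. x - c) ` X) = Max X - c" using mono_Max_commute[OF mono assms(1) False] by simp
  moreover have "Min ((\<lambda>x. x - c) ` X) = Min X - c" using mono_Min_commute[OF mono assms(1) False] by simp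
  moreover have "c \<le> Min X" using assms False by simp
  moreover have "Min X \<le> Max X" using assms False by simp
  ultimately show ?thesis using False by (simp add: span_def)
qed

lemma sum_span_le:
  fixes X :: "'s \<Rightarrow> nat set"
  assumes S: "finite S"
    and X: "\<And>s. s \<in> S \<Longrightarrow> X s \<subseteq> {..<N}"
    and sep: "\<And>s s'. s \<in> S \<Longrightarrow> s' \<in> S \<Longrightarrow> s \<noteq> s' \<Longrightarrow>
                (\<forall>x\<in>X s. \<forall>y\<in>X s'. x < y) \<or> (\<forall>x\<in>X s. \<forall>y\<in>X s'. y < x)"
  shows "(\<Sum>s\<in>S. span (X s)) \<le> N"
proof -
  define R where "R s = (if X s = {} then {} else {Min (X s)..Max (X s)})" for s
  have fin: "finite (X s)" if "s \<in> S" for s using X[OF that] finite_subset by blast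
  have cardR: "card (R s) = span (X s)" if "s \<in> S" for s
  proof (cases "X s = {}")
    case False
    then have "Min (X s) \<le> Max (X s)" using fin[OF that] by simp
    then show ?thesis using False by (simp add: R_def span_def Suc_diff_le)
  qed (simp add: R_def span_def)
  have RN: "R s \<subseteq> {..<N}" if "s \<in> S" for s
  proof (cases "X s = {}")
    case False
    then have "Max (X s) \<in> X s" using fin[OF that] by simp
    then have "Max (X s) < N" using X[OF that] by auto
    then show ?thesis by (auto simp: R_def)
  qed (simp add: R_def)
  have disj: "R s \<inter> R s' = {}" if "s \<in> S" "s' \<in> S" "s \<noteq> s'" for s s'
  proof (cases "X s = {} \<or> X s' = {}")
    case True then show ?thesis by (auto simp: R_def)
  next
    case False
    then have ne: "X s \<noteq> {}" "X s' \<noteq> {}" by auto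
    have m1: "Max (X s) \<in> X s" "Min (X s) \<in> X s" using ne fin that by auto
    have m2: "Max (X s') \<in> X s'" "Min (X s') \<in> X s'" using ne fin that by auto
    from sep[OF that] show ?thesis
    proof
      assume "\<forall>x\<in>X s. \<forall>y\<in>X s'. x < y"
      then have "Max (X s) < Min (X s')" using m1 m2 by blast
      then show ?thesis using ne by (auto simp: R_def)
    next
      assume "\<forall>x\<in>X s. \<forall>y\<in>X s'. y < x"
      then have "Max (X s') < Min (X s)" using m1 m2 by blast
      then show ?thesis using ne by (auto simp: R_def)
    qed
  qed
  have "(\<Sum>s\<in>S. span (X s)) = (\<Sum>s\<in>S. card (R s))" using cardR by simp
  also have "\<dots> = card (\<Union>s\<in>S. R s)"
    by (rule card_UN_disjoint[symmetric]) (use S disj in \<open>auto simp: R_def\<close>)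
  also have "\<dots> \<le> card {..<N}" by (rule card_mono) (use RN in auto)
  finally show ?thesis by simp
qed


lemma sep_image:
  fixes h :: "nat \<Rightarrow> nat"
  assumes "\<forall>t\<in>A. \<forall>t'\<in>A'. t < t'" "\<And>t t'. t \<in> A \<Longrightarrow> t' \<in> A' \<Longrightarrow> t < t' \<Longrightarrow> h t < h t'"
  shows "\<forall>x\<in>h ` A. \<forall>y\<in>h ` A'. x < y"
  using assms by blast

lemma length_concat_blocks:
  assumes "\<And>i. i < n \<Longrightarrow> length (F i) = m"
  shows "length (concat (map F [0..<n])) = n * m"
  using assms by (induction n) auto

lemma core:
  fixes \<eta> \<theta> :: real and k Q n m :: nat
    and c c' :: "nat list" and e :: "nat \<Rightarrow> nat \<Rightarrow> nat list"
  assumes theta: "0 \<le> \<theta>"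
    and k: "k \<ge> 2"
    and cw: "c \<in> words Q n" and cw': "c' \<in> words Q n"
    and dist: "real (hamming c c') / real n \<ge> 1 - \<eta>"
    and e_words: "\<And>i \<alpha>. i < n \<Longrightarrow> \<alpha> < Q \<Longrightarrow> e i \<alpha> \<in> words k m"
    and e_inj: "inj_on (\<lambda>(i, \<alpha>). e i \<alpha>) ({0..<n} \<times> {0..<Q})"
    and inner: "\<And>c1 c2 I J. c1 \<in> (\<lambda>(i, \<alpha>). e i \<alpha>) ` ({0..<n} \<times> {0..<Q}) \<Longrightarrow>
                   c2 \<in> (\<lambda>(i, \<alpha>). e i \<alpha>) ` ({0..<n} \<times> {0..<Q}) \<Longrightarrow> c1 \<noteq> c2 \<Longrightarrow>
                   common_subseq c1 c2 I J \<Longrightarrow>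
                   real (span I + span J) \<ge> (real k + sqrt (real k)) * real (subseq_len I) - \<theta> * real k * real m"
    and cs: "common_subseq (concat (map (\<lambda>i. e i (c ! i)) [0..<n]))
                           (concat (map (\<lambda>i. e i (c' ! i)) [0..<n])) I J"
  shows "real (card I) \<le> (2 / (real k + sqrt (real k)) + 2 * \<theta> + \<eta>) * real (n * m)"
proof -
  define K where "K = real k + sqrt (real k)"
  have kK: "real k \<le> K" unfolding K_def by simp
  have K0: "K > 0" using k kK by linarith
  define w where "w = concat (map (\<lambda>i. e i (c ! i)) [0..<n])"
  define w' where "w' = concat (map (\<lambda>i. e i (c' ! i)) [0..<n])"
  have lc: "length c = n" "set c \<subseteq> {0..<Q}" using cw by (auto simp: words_def)
  have lc': "length c' = n" "set c' \<subseteq> {0..<Q}" using cw' by (auto simp: words_def)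
  have cQ: "c ! i < Q" "c' ! i < Q" if "i < n" for i
    using lc lc' that nth_mem by (metis atLeastLessThan_iff subsetD)+
  have lv: "length (e i (c ! i)) = m" "length (e i (c' ! i)) = m" if "i < n" for i
    using e_words[OF that cQ(1)[OF that]] e_words[OF that cQ(2)[OF that]] by (auto simp: words_def)
  have nw: "w ! p = e (p div m) (c ! (p div m)) ! (p mod m)" if "p < n * m" for p
    unfolding w_def by (rule nth_concat_blocks) (use lv that in auto)
  have nw': "w' ! p = e (p div m) (c' ! (p div m)) ! (p mod m)" if "p < n * m" for p
    unfolding w'_def by (rule nth_concat_blocks) (use lv that in auto)
  have lw: "length w = n * m" "length w' = n * m"
    unfolding w_def w'_def by (rule length_concat_blocks, use lv in auto)+
  have IJ: "I \<subseteq> {..<n*m}" "J \<subseteq> {..<n*m}" "nths w I = nths w' J"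
    using cs lw unfolding common_subseq_def w_def w'_def by auto
  show ?thesis
  proof (cases "n * m = 0")
  case True
  then have "I = {}" using IJ by auto
  moreover have "real (n * m) = 0" using True by (simp only: of_nat_0)
  ultimately show ?thesis by (metis card.empty of_nat_0 mult_zero_right order_refl)
next
  case False
  then have m0: "m > 0" and n0: "n > 0" by auto
  have finI: "finite I" and finJ: "finite J" using IJ finite_subset by blast+
  define lI where "lI = sorted_list_of_set I"
  define lJ where "lJ = sorted_list_of_set J"
  define L where "L = card I"
  have eq: "map ((!) w) lI = map ((!) w') lJ"
    using IJ nths_eq_map lw unfolding lI_def lJ_def by metis
  have lenI: "length lI = L" unfolding lI_def L_def by simp
  have lenJ: "length lJ = L" using eq lenI by (metis length_map)
  define f where "f t = lI ! t" for t
  define g where "g t = lJ ! t" for t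
  have fI: "f t < n * m" if "t < L" for t
  proof -
    have "f t \<in> I" unfolding f_def using that lenI finI by (metis lI_def nth_mem set_sorted_list_of_set)
    then show ?thesis using IJ by auto
  qed
  have gJ: "g t < n * m" if "t < L" for t
  proof -
    have "g t \<in> J" unfolding g_def using that lenJ finJ by (metis lJ_def nth_mem set_sorted_list_of_set)
    then show ?thesis using IJ by auto
  qed
  have fw: "w ! f t = w' ! g t" if "t < L" for t
    using arg_cong[OF eq, of "\<lambda>xs. xs ! t"] that lenI lenJ by (simp add: f_def g_def)
  have fmono: "f t < f t'" if "t < t'" "t' < L" for t t'
    unfolding f_def using sorted_wrt_nth_less[OF strict_sorted_list_of_set[of I] that(1)] that lenI
    by (simp add: lI_def)
  have gmono: "g t < g t'" if "t < t'" "t' < L" for t t'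
    unfolding g_def using sorted_wrt_nth_less[OF strict_sorted_list_of_set[of J] that(1)] that lenJ
    by (simp add: lJ_def)
  have fle: "f t \<le> f t'" if "t \<le> t'" "t' < L" for t t'
    using fmono[of t t'] that by (cases "t = t'") auto
  have gle: "g t \<le> g t'" if "t \<le> t'" "t' < L" for t t'
    using gmono[of t t'] that by (cases "t = t'") auto
  have finj: "f t = f t' \<Longrightarrow> t = t'" if "t < L" "t' < L" for t t'
    using fmono that by (metis linorder_neq_iff less_irrefl)
  define a where "a t = f t div m" for t
  define b where "b t = g t div m" for t
  have an: "a t < n" if "t < L" for t
    unfolding a_def using fI[OF that] by (simp add: less_mult_imp_div_less)
  have bn: "b t < n" if "t < L" for t
    unfolding b_def using gJ[OF that] by (simp add: less_mult_imp_div_less)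
  have amono: "a t \<le> a t'" if "t \<le> t'" "t' < L" for t t'
    unfolding a_def using fle[OF that] by (rule div_le_mono)
  have bmono: "b t \<le> b t'" if "t \<le> t'" "t' < L" for t t'
    unfolding b_def using gle[OF that] by (rule div_le_mono)
  define good where "good t \<longleftrightarrow> a t = b t \<and> c ! (a t) = c' ! (a t)" for t
  define G where "G = {t\<in>{..<L}. good t}"
  define B where "B = {t\<in>{..<L}. \<not> good t}"
  have LGB: "L = card G + card B"
  proof -
    have "card (G \<union> B) = card G + card B" by (rule card_Un_disjoint) (auto simp: G_def B_def)
    moreover have "G \<union> B = {..<L}" unfolding G_def B_def by auto
    ultimately show ?thesis by simp
  qed
  define A where "A = {i. i < n \<and> c ! i = c' ! i}"
  define H where "H = {i. i < n \<and> c ! i \<noteq> c' ! i}"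
  have hamH: "hamming c c' = card H" unfolding hamming_def H_def using lc by simp
  have AH: "card A + card H = n"
  proof -
    have "card (A \<union> H) = card A + card H" by (rule card_Un_disjoint) (auto simp: A_def H_def)
    moreover have "A \<union> H = {..<n}" unfolding A_def H_def by auto
    ultimately show ?thesis by simp
  qed
  have Hbig: "real (card H) \<ge> (1 - \<eta>) * real n"
    using dist n0 hamH by (simp add: pos_le_divide_eq)
  have Asmall: "real (card A) \<le> \<eta> * real n"
  proof -
    have "real (card A) = real n - real (card H)" using AH by linarith
    then show ?thesis using Hbig by (simp add: algebra_simps)
  qed
  have blocksize: "card {t\<in>{..<L}. a t = i} \<le> m" for i
  proof -
    have "inj_on (\<lambda>t. f t mod m) {t\<in>{..<L}. a t = i}"
    proof (rule inj_onI)
      fix t t' assume t: "t \<in> {t\<in>{..<L}. a t = i}" and t': "t' \<in> {t\<in>{..<L}. a t = i}"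
        and md: "f t mod m = f t' mod m"
      have "f t = f t div m * m + f t mod m" by simp
      also have "\<dots> = f t' div m * m + f t' mod m" using t t' md by (simp add: a_def)
      also have "\<dots> = f t'" by simp
      finally show "t = t'" using finj t t' by auto
    qed
    moreover have "(\<lambda>t. f t mod m) ` {t\<in>{..<L}. a t = i} \<subseteq> {..<m}" using m0 by auto
    ultimately show ?thesis using card_inj_on_le[of _ _ "{..<m}"] by fastforce
  qed
  have Gsmall: "real (card G) \<le> \<eta> * real (n * m)"
  proof -
    have "G \<subseteq> (\<Union>i\<in>A. {t\<in>{..<L}. a t = i})"
      unfolding G_def A_def good_def using an by auto
    then have "card G \<le> card (\<Union>i\<in>A. {t\<in>{..<L}. a t = i})"
      by (intro card_mono) (auto intro: finite_subset[of _ "{..<L}"])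
    also have "\<dots> \<le> (\<Sum>i\<in>A. card {t\<in>{..<L}. a t = i})" by (rule card_UN_le) (simp add: A_def)
    also have "\<dots> \<le> (\<Sum>i\<in>A. m)" by (rule sum_mono) (rule blocksize)
    also have "\<dots> = card A * m" by simp
    finally have "real (card G) \<le> real (card A) * real m" by (metis of_nat_le_iff of_nat_mult)
    also have "\<dots> \<le> \<eta> * real n * real m" using Asmall by (simp add: mult_right_mono)
    finally show ?thesis by simp
  qed
  define pr where "pr t = (a t, b t)" for t
  define S where "S = pr ` B"
  define P where "P s = {t\<in>{..<L}. pr t = s}" for s
  have good_pr: "good t \<longleftrightarrow> fst (pr t) = snd (pr t) \<and> c ! fst (pr t) = c' ! fst (pr t)" for t
    by (simp add: good_def pr_def)
  have PB: "P s \<subseteq> B" if sS: "s \<in> S" for s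
  proof
    fix t assume t: "t \<in> P s"
    obtain t0 where t0: "t0 \<in> B" "s = pr t0" using sS unfolding S_def by blast
    have "pr t = pr t0" "t < L" using t t0 by (auto simp: P_def)
    moreover have "\<not> good t0" using t0 by (simp add: B_def)
    ultimately have "\<not> good t" unfolding good_pr by simp
    then show "t \<in> B" using \<open>t < L\<close> by (simp add: B_def)
  qed
  have BU: "B = (\<Union>s\<in>S. P s)" 
  proof
    show "B \<subseteq> (\<Union>s\<in>S. P s)"
    proof
      fix t assume "t \<in> B"
      then have "t \<in> P (pr t)" "pr t \<in> S" by (auto simp: P_def S_def B_def)
      then show "t \<in> (\<Union>s\<in>S. P s)" by blast
    qed
  qed (use PB in blast)
  have finS: "finite S" unfolding S_def B_def by simp
  have finP: "finite (P s)" for s unfolding P_def by simp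
  have cardB: "card B = (\<Sum>s\<in>S. card (P s))"
  proof -
    have "card (\<Union>s\<in>S. P s) = (\<Sum>s\<in>S. card (P s))"
      by (rule card_UN_disjoint[OF finS]) (auto simp: finP P_def)
    then show ?thesis using BU by simp
  qed
  have sep: "(\<forall>t\<in>P s. \<forall>t'\<in>P s'. t < t') \<or> (\<forall>t\<in>P s. \<forall>t'\<in>P s'. t' < t)"
    if "s \<noteq> s'" for s s'
  proof (rule ccontr)
    assume "\<not> ?thesis"
    then obtain u u' v v' where u: "u \<in> P s" "u' \<in> P s'" "\<not> u < u'"
      and v: "v \<in> P s" "v' \<in> P s'" "\<not> v' < v" by blast
    have pu: "pr u = s" "pr u' = s'" "pr v = s" "pr v' = s'" "u < L" "v' < L"
      using u v by (auto simp: P_def)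
    have "u \<noteq> u'" "v \<noteq> v'" using pu that by auto
    then have lt: "u' < u" "v < v'" using u(3) v(3) by auto
    have "a u' \<le> a u" "b u' \<le> b u" "a v \<le> a v'" "b v \<le> b v'"
      using amono[OF less_imp_le[OF lt(1)] pu(5)] bmono[OF less_imp_le[OF lt(1)] pu(5)]
        amono[OF less_imp_le[OF lt(2)] pu(6)] bmono[OF less_imp_le[OF lt(2)] pu(6)] by auto
    moreover have "s = (a u, b u)" "s = (a v, b v)" "s' = (a u', b u')" "s' = (a v', b v')"
      using pu by (auto simp: pr_def)
    ultimately have "s = s'" by simp
    then show False using that by simp
  qed
  have sumF: "(\<Sum>s\<in>S. span (f ` P s)) \<le> n * m"
  proof (rule sum_span_le[OF finS])
    show "f ` P s \<subseteq> {..<n * m}" for s using fI unfolding P_def by blast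
    fix s s' assume "s \<in> S" "s' \<in> S" and ss': "s \<noteq> s'"
    have hm: "f t < f t'" if "t \<in> P s0" "t' \<in> P s1" "t < t'" for t t' s0 s1
      using fmono[of t t'] that by (simp add: P_def)
    from sep[OF ss'] show "(\<forall>x\<in>f ` P s. \<forall>y\<in>f ` P s'. x < y) \<or> (\<forall>x\<in>f ` P s. \<forall>y\<in>f ` P s'. y < x)"
    proof
      assume h: "\<forall>t\<in>P s. \<forall>t'\<in>P s'. t < t'"
      have "\<forall>x\<in>f ` P s. \<forall>y\<in>f ` P s'. x < y" by (rule sep_image[OF h hm])
      then show ?thesis ..
    next
      assume h: "\<forall>t\<in>P s. \<forall>t'\<in>P s'. t' < t"
      then have h': "\<forall>t\<in>P s'. \<forall>t'\<in>P s. t < t'" by blast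
      have "\<forall>x\<in>f ` P s'. \<forall>y\<in>f ` P s. x < y" by (rule sep_image[OF h' hm])
      then show ?thesis by blast
    qed
  qed
  have sumG: "(\<Sum>s\<in>S. span (g ` P s)) \<le> n * m"
  proof (rule sum_span_le[OF finS])
    show "g ` P s \<subseteq> {..<n * m}" for s using gJ unfolding P_def by blast
    fix s s' assume "s \<in> S" "s' \<in> S" and ss': "s \<noteq> s'"
    have hm: "g t < g t'" if "t \<in> P s0" "t' \<in> P s1" "t < t'" for t t' s0 s1
      using gmono[of t t'] that by (simp add: P_def)
    from sep[OF ss'] show "(\<forall>x\<in>g ` P s. \<forall>y\<in>g ` P s'. x < y) \<or> (\<forall>x\<in>g ` P s. \<forall>y\<in>g ` P s'. y < x)"
    proof
      assume h: "\<forall>t\<in>P s. \<forall>t'\<in>P s'. t < t'"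
      have "\<forall>x\<in>g ` P s. \<forall>y\<in>g ` P s'. x < y" by (rule sep_image[OF h hm])
      then show ?thesis ..
    next
      assume h: "\<forall>t\<in>P s. \<forall>t'\<in>P s'. t' < t"
      then have h': "\<forall>t\<in>P s'. \<forall>t'\<in>P s. t < t'" by blast
      have "\<forall>x\<in>g ` P s'. \<forall>y\<in>g ` P s. x < y" by (rule sep_image[OF h' hm])
      then show ?thesis by blast
    qed
  qed
  have cardS: "card S \<le> 2 * n"
  proof -
    have "inj_on (\<lambda>p. fst p + snd p) S"
    proof (rule inj_onI)
      fix p q assume p: "p \<in> S" and q: "q \<in> S" and eqs: "fst p + snd p = fst q + snd q"
      obtain t where t: "t \<in> B" "p = pr t" using p by (auto simp: S_def)
      obtain t' where t': "t' \<in> B" "q = pr t'" using q by (auto simp: S_def)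
      have tL: "t < L" "t' < L" using t t' by (auto simp: B_def)
      show "p = q"
      proof (cases "t \<le> t'")
        case True
        have "a t \<le> a t'" "b t \<le> b t'" using amono[OF True tL(2)] bmono[OF True tL(2)] by auto
        then show ?thesis using eqs t t' by (auto simp: pr_def)
      next
        case False
        then have "t' \<le> t" by simp
        then have "a t' \<le> a t" "b t' \<le> b t" using amono[OF _ tL(1)] bmono[OF _ tL(1)] by auto
        then show ?thesis using eqs t t' by (auto simp: pr_def)
      qed
    qed
    moreover have "(\<lambda>p. fst p + snd p) ` S \<subseteq> {..<2*n}"
    proof
      fix x assume "x \<in> (\<lambda>p. fst p + snd p) ` S"
      then obtain t where "t < L" "x = a t + b t" by (auto simp: S_def B_def pr_def)
      then show "x \<in> {..<2*n}" using an[of t] bn[of t] by simp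
    qed
    ultimately show ?thesis using card_inj_on_le[of _ S "{..<2*n}"] by fastforce
  qed
  have piece: "K * real (card (P s)) \<le> real (span (f ` P s)) + real (span (g ` P s)) + \<theta> * real k * real m"
    if sS: "s \<in> S" for s
  proof -
    obtain t0 where t0: "t0 \<in> B" "s = pr t0" using sS unfolding S_def by blast
    define i where "i = a t0"
    define j where "j = b t0"
    have t0L: "t0 < L" and ng: "\<not> good t0" using t0 by (auto simp: B_def)
    have ij: "i < n" "j < n" using an[OF t0L] bn[OF t0L] by (auto simp: i_def j_def)
    have Ps: "a t = i" "b t = j" "t < L" if "t \<in> P s" for t
      using that t0 by (auto simp: P_def pr_def i_def j_def)
    define v where "v = e i (c ! i)"
    define v' where "v' = e j (c' ! j)"
    have lenv: "length v = m" "length v' = m" using lv ij by (auto simp: v_def v'_def)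
    have mem: "(i, c ! i) \<in> {0..<n} \<times> {0..<Q}" "(j, c' ! j) \<in> {0..<n} \<times> {0..<Q}"
      using ij cQ by auto
    have vin: "v \<in> (\<lambda>(i, \<alpha>). e i \<alpha>) ` ({0..<n} \<times> {0..<Q})"
      unfolding v_def by (rule image_eqI[OF _ mem(1)]) simp
    have vin': "v' \<in> (\<lambda>(i, \<alpha>). e i \<alpha>) ` ({0..<n} \<times> {0..<Q})"
      unfolding v'_def by (rule image_eqI[OF _ mem(2)]) simp
    have vne: "v \<noteq> v'"
    proof
      assume "v = v'"
      then have "(\<lambda>(i, \<alpha>). e i \<alpha>) (i, c ! i) = (\<lambda>(i, \<alpha>). e i \<alpha>) (j, c' ! j)"
        by (simp add: v_def v'_def)
      then have "(i, c ! i) = (j, c' ! j)" by (rule inj_onD[OF e_inj _ mem(1) mem(2)])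
      then have "a t0 = b t0 \<and> c ! (a t0) = c' ! (a t0)" unfolding i_def j_def by auto
      then have "good t0" unfolding good_def by blast
      then show False using ng by simp
    qed
    define hf where "hf t = f t mod m" for t
    define hg where "hg t = g t mod m" for t
    have fdec: "f t = i * m + hf t" if "t \<in> P s" for t
      using Ps[OF that] div_mult_mod_eq[of "f t" m] by (simp add: a_def hf_def)
    have gdec: "g t = j * m + hg t" if "t \<in> P s" for t
      using Ps[OF that] div_mult_mod_eq[of "g t" m] by (simp add: b_def hg_def)
    have hfmono: "strict_mono_on (P s) hf"
    proof (rule strict_mono_onI)
      fix t t' assume "t \<in> P s" "t' \<in> P s" "t < t'"
      then show "hf t < hf t'" using fmono[of t t'] fdec Ps by fastforce
    qed
    have hgmono: "strict_mono_on (P s) hg"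
    proof (rule strict_mono_onI)
      fix t t' assume "t \<in> P s" "t' \<in> P s" "t < t'"
      then show "hg t < hg t'" using gmono[of t t'] gdec Ps by fastforce
    qed
    have spf: "span (hf ` P s) = span (f ` P s)"
    proof -
      have "hf ` P s = (\<lambda>x. x - i * m) ` (f ` P s)"
        unfolding image_image using fdec by (intro image_cong) auto
      moreover have "span ((\<lambda>x. x - i * m) ` (f ` P s)) = span (f ` P s)"
        by (rule span_shift) (use finP fdec in auto)
      ultimately show ?thesis by simp
    qed
    have spg: "span (hg ` P s) = span (g ` P s)"
    proof -
      have "hg ` P s = (\<lambda>x. x - j * m) ` (g ` P s)"
        unfolding image_image using gdec by (intro image_cong) auto
      moreover have "span ((\<lambda>x. x - j * m) ` (g ` P s)) = span (g ` P s)"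
        by (rule span_shift) (use finP gdec in auto)
      ultimately show ?thesis by simp
    qed
    have subI: "hf ` P s \<subseteq> {..<length v}" using m0 lenv by (auto simp: hf_def)
    have subJ: "hg ` P s \<subseteq> {..<length v'}" using m0 lenv by (auto simp: hg_def)
    have vf: "v ! hf t = w ! f t" if "t \<in> P s" for t
      using nw[OF fI[OF Ps(3)[OF that]]] Ps[OF that] by (simp add: v_def a_def hf_def)
    have vg: "v' ! hg t = w' ! g t" if "t \<in> P s" for t
      using nw'[OF gJ[OF Ps(3)[OF that]]] Ps[OF that] by (simp add: v'_def b_def hg_def)
    have "nths v (hf ` P s) = map (\<lambda>t. v ! hf t) (sorted_list_of_set (P s))"
      using nths_eq_map[OF subI] sorted_list_of_set_mono_image[OF finP hfmono] by simp
    also have "\<dots> = map (\<lambda>t. v' ! hg t) (sorted_list_of_set (P s))"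
    proof (rule map_cong[OF refl])
      fix t assume "t \<in> set (sorted_list_of_set (P s))"
      then have t: "t \<in> P s" using finP by simp
      show "v ! hf t = v' ! hg t" using vf[OF t] vg[OF t] fw[OF Ps(3)[OF t]] by simp
    qed
    also have "\<dots> = nths v' (hg ` P s)"
      using nths_eq_map[OF subJ] sorted_list_of_set_mono_image[OF finP hgmono] by simp
    finally have cs': "common_subseq v v' (hf ` P s) (hg ` P s)"
      using subI subJ by (simp add: common_subseq_def)
    have cardeq: "subseq_len (hf ` P s) = card (P s)"
      unfolding subseq_len_def by (rule card_image[OF strict_mono_on_imp_inj_on[OF hfmono]])
    from inner[OF vin vin' vne cs'] show ?thesis
      unfolding cardeq spf spg K_def by simp
  qed
  have "K * real (card B) = (\<Sum>s\<in>S. K * real (card (P s)))"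
    by (simp add: cardB sum_distrib_left)
  also have "\<dots> \<le> (\<Sum>s\<in>S. real (span (f ` P s)) + real (span (g ` P s)) + \<theta> * real k * real m)"
    by (rule sum_mono) (rule piece)
  also have "\<dots> = real (\<Sum>s\<in>S. span (f ` P s)) + real (\<Sum>s\<in>S. span (g ` P s)) + real (card S) * (\<theta> * real k * real m)"
    by (simp add: sum.distrib)
  also have "\<dots> \<le> real (n * m) + real (n * m) + real (2 * n) * (\<theta> * real k * real m)"
  proof -
    have "0 \<le> \<theta> * real k * real m" using theta by simp
    then have "real (card S) * (\<theta> * real k * real m) \<le> real (2 * n) * (\<theta> * real k * real m)"
      using cardS by (intro mult_right_mono) auto
    moreover have "real (\<Sum>s\<in>S. span (f ` P s)) \<le> real (n * m)" using sumF by linarith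
    moreover have "real (\<Sum>s\<in>S. span (g ` P s)) \<le> real (n * m)" using sumG by linarith
    ultimately show ?thesis by linarith
  qed
  finally have Bbound: "K * real (card B) \<le> 2 * real (n * m) + 2 * \<theta> * real k * real (n * m)"
    by (simp add: algebra_simps)
  have "2 * \<theta> * real k * real (n * m) \<le> 2 * \<theta> * K * real (n * m)"
    using kK theta by (intro mult_right_mono mult_left_mono) auto
  with Bbound have B2: "K * real (card B) \<le> 2 * real (n * m) + 2 * \<theta> * K * real (n * m)" by linarith
  have "K * real L = K * real (card G) + K * real (card B)" using LGB by (simp add: algebra_simps)
  also have "\<dots> \<le> K * (\<eta> * real (n * m)) + (2 * real (n * m) + 2 * \<theta> * K * real (n * m))"
    using Gsmall B2 K0 by (intro add_mono mult_left_mono) auto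
  also have "\<dots> = K * ((2 / K + 2 * \<theta> + \<eta>) * real (n * m))"
    using K0 by (simp add: field_simps)
  finally have "real L \<le> (2 / K + 2 * \<theta> + \<eta>) * real (n * m)"
    using K0 by (simp add: mult_le_cancel_left_pos)
  then show ?thesis by (simp add: L_def K_def)
qed
qed

theorem lemma5p1:
  fixes \<eta> \<theta> :: real and k Q n m :: nat
    and C_out :: "nat list set" and e :: "nat \<Rightarrow> nat \<Rightarrow> nat list"
  assumes eta: "0 < \<eta>" "\<eta> \<le> 1"
    and theta: "0 < \<theta>" "\<theta> \<le> 1"
    and k: "k \<ge> 2"
    and Cout: "C_out \<subseteq> words Q n"
    and dist: "rel_dist_ge C_out n (1 - \<eta>)"
    and e_words: "\<And>i \<alpha>. i < n \<Longrightarrow> \<alpha> < Q \<Longrightarrow> e i \<alpha> \<in> words k m"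
    and e_inj: "inj_on (\<lambda>(i, \<alpha>). e i \<alpha>) ({0..<n} \<times> {0..<Q})"
    and inner: "\<And>c1 c2 I J. c1 \<in> (\<lambda>(i, \<alpha>). e i \<alpha>) ` ({0..<n} \<times> {0..<Q}) \<Longrightarrow>
                   c2 \<in> (\<lambda>(i, \<alpha>). e i \<alpha>) ` ({0..<n} \<times> {0..<Q}) \<Longrightarrow> c1 \<noteq> c2 \<Longrightarrow>
                   common_subseq c1 c2 I J \<Longrightarrow>
                   real (span I + span J) \<ge> (real k + sqrt (real k)) * real (subseq_len I) - \<theta> * real k * real m"
  shows "real (LCS ((\<lambda>c. concat (map (\<lambda>i. e i (c ! i)) [0..<n])) ` C_out))
           \<le> (2 / (real k + sqrt (real k)) + 2 * \<theta> + \<eta>) * real (n * m)"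
proof -
  define W where "W = (\<lambda>c. concat (map (\<lambda>i. e i (c ! i)) [0..<n]))"
  define Bd where "Bd = (2 / (real k + sqrt (real k)) + 2 * \<theta> + \<eta>) * real (n * m)"
  have Bd0: "Bd \<ge> 0" unfolding Bd_def using eta theta k by (intro mult_nonneg_nonneg add_nonneg_nonneg) auto
  define z where "z = nat \<lfloor>Bd\<rfloor>"
  have zB: "real z \<le> Bd" unfolding z_def using Bd0 by linarith
  have cardle: "card I \<le> z" if c: "c \<in> C_out" "c' \<in> C_out" "W c \<noteq> W c'"
      and cs: "common_subseq (W c) (W c') I J" for c c' I J
  proof -
    have "c \<noteq> c'" using c by auto
    then have d: "real (hamming c c') / real n \<ge> 1 - \<eta>" using dist c unfolding rel_dist_ge_def by blast
    have "real (card I) \<le> Bd" unfolding Bd_def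
      by (rule core[OF _ k _ _ d e_words e_inj inner]) (use theta c Cout cs in \<open>auto simp: W_def\<close>)
    then show ?thesis unfolding z_def by (simp add: le_nat_floor)
  qed
  have lcsle: "lcs_len (W c) (W c') \<le> z" if c: "c \<in> C_out" "c' \<in> C_out" "W c \<noteq> W c'" for c c'
    unfolding lcs_len_def
  proof (rule cSup_least)
    have "common_subseq (W c) (W c') {} {}" by (simp add: common_subseq_def)
    then show "{subseq_len I |I J. common_subseq (W c) (W c') I J} \<noteq> {}" by blast
    fix x assume "x \<in> {subseq_len I |I J. common_subseq (W c) (W c') I J}"
    then show "x \<le> z" using cardle[OF c] by (auto simp: subseq_len_def)
  qed
  have "LCS (W ` C_out) \<le> z"
  proof (cases "{lcs_len c d |c d. c \<in> W ` C_out \<and> d \<in> W ` C_out \<and> c \<noteq> d} = {}")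
    case True
    show ?thesis unfolding LCS_def True by simp
  next
    case False
    show ?thesis unfolding LCS_def
      by (rule cSup_least[OF False]) (use lcsle in auto)
  qed
  then have "real (LCS (W ` C_out)) \<le> Bd" using zB by linarith
  then show ?thesis unfolding W_def Bd_def .
qed

end
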